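(* Let $S$ be a random variable (the stimulus) taking values in a finite set $\mathcal{S}$ with $P(s)>0$ for all $s\in\mathcal{S}$, and let $\mathbf{R}=(R_1,\ldots,R_N)$ be a random vector (the neural response) taking values in a finite product set, with joint distribution $P(s,\mathbf{r})$. Let $\mathbf{R}^{NI}$ denote the surrogate response whose conditional distribution given $S=s$ is $P^{NI}(\mathbf{r}|s)=\prod_{n=1}^N P(r_n|s)$ (with $S$ keeping its marginal distribution). Then: (i) there exist such $S$ and $\mathbf{R}$ for which there is no stimulus-independent stochastic code mapping $\mathbf{R}$ into $\mathbf{R}^{NI}$, i.e. no transition probabilities $Q(\mathbf{r}'|\mathbf{r})\ge 0$ with $\sum_{\mathbf{r}'}Q(\mathbf{r}'|\mathbf{r})=1$ for all $\mathbf{r}$ such that $P^{NI}(\mathbf{r}'|s)=\sum_{\mathbf{r}}P(\mathbf{r}|s)\,Q(\mathbf{r}'|\mathbf{r})$ for all $s$ and $\mathbf{r}'$; (ii) if $\mathbf{R}$ is noise correlated, i.e. $P(\mathbf{r}|s)\neq P^{NI}(\mathbf{r}|s)$ for some $s$ and $\mathbf{r}$, then there is no deterministic stimulus-independent function $f$ (reduced code) such that $P(f(\mathbf{R})=\mathbf{r}'\,|\,S=s)=P^{NI}(\mathbf{r}'|s)$ for all $s$ and $\mathbf{r}'$.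
   Context: A stochastic code is a code obtained from another code through stimulus-independent transition probabilities $Q(\mathbf{r}'|\mathbf{r})$ as described; a reduced code is the special case of a deterministic stimulus-independent function. The responses $R_n$ are noise independent if $P(\mathbf{r}|s)=P^{NI}(\mathbf{r}|s)$ for all $\mathbf{r},s$, and noise correlated otherwise. *)

theory Defs
  imports Complex_Main
begin

text \<open>Responses: vectors r :: 'n \<Rightarrow> 'a, where 'n (finite)
indexes the N neurons and 'a (finite) contains the response values, so the response set
is the finite product set 'a^N.\<close>

definition valid_joint :: "('s::finite \<Rightarrow> ('n::finite \<Rightarrow> 'a::finite) \<Rightarrow> real) \<Rightarrow> bool" where
  "valid_joint p \<longleftrightarrow> (\<forall>s r. 0 \<le> p s r) \<and> (\<Sum>s\<in>UNIV. \<Sum>r\<in>UNIV. p s r) = 1"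

definition pS :: "('s::finite \<Rightarrow> ('n::finite \<Rightarrow> 'a::finite) \<Rightarrow> real) \<Rightarrow> 's \<Rightarrow> real" where
  "pS p s = (\<Sum>r\<in>UNIV. p s r)"

definition cond :: "('s::finite \<Rightarrow> ('n::finite \<Rightarrow> 'a::finite) \<Rightarrow> real) \<Rightarrow> 's \<Rightarrow> ('n \<Rightarrow> 'a) \<Rightarrow> real" where
  "cond p s r = p s r / pS p s"

definition marg :: "('s::finite \<Rightarrow> ('n::finite \<Rightarrow> 'a::finite) \<Rightarrow> real) \<Rightarrow> 'n \<Rightarrow> 's \<Rightarrow> 'a \<Rightarrow> real" where
  "marg p n s x = (\<Sum>r\<in>{r. r n = x}. cond p s r)"

definition PNI :: "('s::finite \<Rightarrow> ('n::finite \<Rightarrow> 'a::finite) \<Rightarrow> real) \<Rightarrow> 's \<Rightarrow> ('n \<Rightarrow> 'a) \<Rightarrow> real" where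
  "PNI p s r = (\<Prod>n\<in>UNIV. marg p n s (r n))"

text \<open>Stimulus-independent transition probabilities Q(r'|r), written Q r r'.\<close>
definition stochastic_map :: "(('n::finite \<Rightarrow> 'a::finite) \<Rightarrow> ('n \<Rightarrow> 'a) \<Rightarrow> real) \<Rightarrow> bool" where
  "stochastic_map Q \<longleftrightarrow> (\<forall>r r'. 0 \<le> Q r r') \<and> (\<forall>r. (\<Sum>r'\<in>UNIV. Q r r') = 1)"

definition noise_correlated :: "('s::finite \<Rightarrow> ('n::finite \<Rightarrow> 'a::finite) \<Rightarrow> real) \<Rightarrow> bool" where
  "noise_correlated p \<longleftrightarrow> (\<exists>s r. cond p s r \<noteq> PNI p s r)"

end

theory Submission
  imports Defs "HOL-Library.FuncSet"
begin

lemma group_fun: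
  fixes h :: "'i::finite \<Rightarrow> real" and g :: "'i \<Rightarrow> 'j::finite"
  shows "(\<Sum>y\<in>UNIV. \<Sum>r\<in>{r. g r = y}. h r) = (\<Sum>r\<in>UNIV. h r)"
  using sum.group[of "UNIV::'i set" "UNIV::'j set" g h] by simp

lemma gibbs:
  fixes c u :: "'i::finite \<Rightarrow> real"
  assumes c0: "\<And>r. 0 \<le> c r" and u0: "\<And>r. 0 \<le> u r"
    and cs: "(\<Sum>r\<in>UNIV. c r) = 1" and us: "(\<Sum>r\<in>UNIV. u r) = 1"
    and cu: "\<And>r. 0 < c r \<Longrightarrow> 0 < u r"
    and le: "(\<Sum>r\<in>UNIV. c r * ln (c r)) \<le> (\<Sum>r\<in>UNIV. c r * ln (u r))"
  shows "c = u"
proof -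
  define d where "d r = (u r - c r) - c r * (ln (u r) - ln (c r))" for r
  have d0: "0 \<le> d r" for r
  proof (cases "c r = 0")
    case True then show ?thesis using u0[of r] by (simp add: d_def)
  next
    case False
    then have cp: "0 < c r" using c0[of r] by simp
    then have up: "0 < u r" using cu by simp
    have "ln (u r / c r) \<le> u r / c r - 1" using cp up by (intro ln_le_minus_one) simp
    then have "c r * ln (u r / c r) \<le> c r * (u r / c r - 1)" using cp by (intro mult_left_mono) auto
    moreover have "c r * ln (u r / c r) = c r * ln (u r) - c r * ln (c r)"
      using cp up by (simp add: ln_div right_diff_distrib)
    moreover have "c r * (u r / c r - 1) = u r - c r" using cp by (simp add: field_simps)
    ultimately show ?thesis by (simp add: d_def right_diff_distrib)
  qed
  have "(\<Sum>r\<in>UNIV. d r) = (\<Sum>r\<in>UNIV. u r) - (\<Sum>r\<in>UNIV. c r)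
        - ((\<Sum>r\<in>UNIV. c r * ln (u r)) - (\<Sum>r\<in>UNIV. c r * ln (c r)))"
    by (simp add: d_def sum_subtractf right_diff_distrib)
  also have "\<dots> \<le> 0" using cs us le by simp
  finally have "(\<Sum>r\<in>UNIV. d r) = 0" using sum_nonneg[of UNIV d] d0 by fastforce
  then have dz: "\<And>r. d r = 0" using sum_nonneg_eq_0_iff[of UNIV d] d0 by simp
  show ?thesis
  proof
    fix r
    show "c r = u r"
    proof (cases "c r = 0")
      case True then show ?thesis using dz[of r] by (simp add: d_def)
    next
      case False
      then have cp: "0 < c r" using c0[of r] by simp
      then have up: "0 < u r" using cu by simp
      have e1: "c r * ln (u r / c r) = c r * ln (u r) - c r * ln (c r)"
        using cp up by (simp add: ln_div right_diff_distrib)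
      have e2: "c r * (u r / c r - 1) = u r - c r" using cp by (simp add: field_simps)
      have "c r * ln (u r / c r) = c r * (u r / c r - 1)"
        using dz[of r] unfolding e1 e2 by (simp add: d_def right_diff_distrib)
      then have "ln (u r / c r) = u r / c r - 1" using cp by simp
      then have "u r / c r = 1" using cp up by (intro ln_eq_minus_one) auto
      then show ?thesis using cp by simp
    qed
  qed
qed

lemma ent:
  fixes w :: "('n::finite \<Rightarrow> 'a::finite) \<Rightarrow> real" and m :: "'n \<Rightarrow> 'a \<Rightarrow> real"
  assumes nz: "\<And>r n. w r \<noteq> 0 \<Longrightarrow> m n (r n) \<noteq> 0"
    and mg: "\<And>n x. (\<Sum>r\<in>{r. r n = x}. w r) = m n x"
  shows "(\<Sum>r\<in>UNIV. w r * ln (\<Prod>n\<in>UNIV. m n (r n))) = (\<Sum>n\<in>UNIV. \<Sum>x\<in>UNIV. m n x * ln (m n x))"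
proof -
  have "(\<Sum>r\<in>UNIV. w r * ln (\<Prod>n\<in>UNIV. m n (r n))) = (\<Sum>r\<in>UNIV. w r * (\<Sum>n\<in>UNIV. ln (m n (r n))))"
  proof (rule sum.cong)
    fix r
    show "w r * ln (\<Prod>n\<in>UNIV. m n (r n)) = w r * (\<Sum>n\<in>UNIV. ln (m n (r n)))"
      using nz[of r] by (cases "w r = 0") (simp_all add: ln_prod)
  qed simp
  also have "\<dots> = (\<Sum>n\<in>UNIV. \<Sum>r\<in>UNIV. w r * ln (m n (r n)))"
    unfolding sum_distrib_left by (rule sum.swap)
  also have "\<dots> = (\<Sum>n\<in>UNIV. \<Sum>x\<in>UNIV. m n x * ln (m n x))"
  proof (rule sum.cong)
    fix n
    have "(\<Sum>r\<in>UNIV. w r * ln (m n (r n))) = (\<Sum>x\<in>UNIV. \<Sum>r\<in>{r. r n = x}. w r * ln (m n (r n)))"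
      using group_fun[of "\<lambda>r. w r * ln (m n (r n))" "\<lambda>r. r n"] by simp
    also have "\<dots> = (\<Sum>x\<in>UNIV. \<Sum>r\<in>{r. r n = x}. w r * ln (m n x))"
      by (intro sum.cong) auto
    also have "\<dots> = (\<Sum>x\<in>UNIV. m n x * ln (m n x))"
      by (simp add: sum_distrib_right[symmetric] mg)
    finally show "(\<Sum>r\<in>UNIV. w r * ln (m n (r n))) = (\<Sum>x\<in>UNIV. m n x * ln (m n x))" .
  qed simp
  finally show ?thesis .
qed

lemma prod_marg:
  fixes m :: "'n::finite \<Rightarrow> 'a::finite \<Rightarrow> real"
  assumes s1: "\<And>n. (\<Sum>x\<in>UNIV. m n x) = 1"
  shows "(\<Sum>r\<in>{r. r n0 = x}. \<Prod>n\<in>UNIV. m n (r n)) = m n0 x"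
proof -
  define B where "B n = (if n = n0 then {x} else UNIV)" for n
  have PB: "PiE UNIV B = {r. r n0 = x}"
  proof (auto simp: PiE_UNIV_domain Pi_iff B_def)
    fix r :: "'n \<Rightarrow> 'a" assume "\<forall>i. r i \<in> (if i = n0 then {x} else UNIV)"
    then have "r n0 \<in> {x}" by metis
    then show "r n0 = x" by simp
  qed
  have "(\<Prod>n\<in>UNIV. \<Sum>y\<in>B n. m n y) = (\<Sum>g\<in>PiE UNIV B. \<Prod>n\<in>UNIV. m n (g n))"
    by (rule prod_sum_PiE) auto
  moreover have "(\<Prod>n\<in>UNIV. \<Sum>y\<in>B n. m n y) = (\<Prod>n\<in>UNIV. if n = n0 then m n0 x else 1)"
    by (intro prod.cong) (auto simp: B_def s1)
  moreover have "\<dots> = m n0 x" by (simp add: prod.delta)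
  ultimately show ?thesis using PB by simp
qed

lemma part2:
  fixes p :: "'s::finite \<Rightarrow> ('n::finite \<Rightarrow> 'a::finite) \<Rightarrow> real"
    and f :: "('n \<Rightarrow> 'a) \<Rightarrow> ('n \<Rightarrow> 'a)"
  assumes v: "valid_joint p" and pos: "pS p s > 0"
    and hf: "\<And>r'. (\<Sum>r\<in>{r. f r = r'}. cond p s r) = PNI p s r'"
  shows "cond p s = PNI p s"
proof -
  define c where "c = cond p s"
  define m where "m = (\<lambda>n. marg p n s)"
  define u where "u = PNI p s"
  have u_def': "u r = (\<Prod>n\<in>UNIV. m n (r n))" for r by (simp add: u_def m_def PNI_def)
  have c0: "0 \<le> c r" for r using v pos by (simp add: c_def cond_def valid_joint_def)
  have cs: "(\<Sum>r\<in>UNIV. c r) = 1" using pos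
    by (simp add: c_def cond_def pS_def sum_divide_distrib[symmetric])
  have mg: "(\<Sum>r\<in>{r. r n = x}. c r) = m n x" for n x by (simp add: m_def marg_def c_def)
  have mge: "c r \<le> m n (r n)" for r n
    using mg[of n "r n", symmetric] c0 by (auto intro: member_le_sum)
  have m0: "0 \<le> m n x" for n x unfolding mg[symmetric] using c0 by (simp add: sum_nonneg)
  have ms: "(\<Sum>x\<in>UNIV. m n x) = 1" for n
    using group_fun[of c "\<lambda>r. r n"] cs by (simp add: mg)
  have hf': "(\<Sum>r\<in>{r. f r = r'}. c r) = u r'" for r' using hf by (simp add: c_def u_def)
  have u0: "0 \<le> u r" for r unfolding u_def' using m0 by (simp add: prod_nonneg)
  have us: "(\<Sum>r\<in>UNIV. u r) = 1"
    using group_fun[of c f] cs by (simp add: hf')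
  have cu: "0 < u r" if "0 < c r" for r
    unfolding u_def' using mge[of r] that by (intro prod_pos) (auto intro: less_le_trans)
  have s1: "(\<Sum>r\<in>UNIV. c r * ln (c r)) \<le> (\<Sum>r\<in>UNIV. c r * ln (u (f r)))"
  proof (rule sum_mono)
    fix r
    show "c r * ln (c r) \<le> c r * ln (u (f r))"
    proof (cases "c r = 0")
      case True then show ?thesis by simp
    next
      case False
      then have cp: "0 < c r" using c0[of r] by simp
      have "c r \<le> u (f r)" unfolding hf'[symmetric] using c0 by (auto intro: member_le_sum)
      then have "ln (c r) \<le> ln (u (f r))" using cp by simp
      then show ?thesis using cp by (intro mult_left_mono) auto
    qed
  qed
  have s2: "(\<Sum>r\<in>UNIV. c r * ln (u (f r))) = (\<Sum>r\<in>UNIV. u r * ln (u r))"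
  proof -
    have "(\<Sum>r\<in>UNIV. c r * ln (u (f r))) = (\<Sum>y\<in>UNIV. \<Sum>r\<in>{r. f r = y}. c r * ln (u (f r)))"
      using group_fun[of "\<lambda>r. c r * ln (u (f r))" f] by simp
    also have "\<dots> = (\<Sum>y\<in>UNIV. \<Sum>r\<in>{r. f r = y}. c r * ln (u y))"
      by (intro sum.cong) auto
    also have "\<dots> = (\<Sum>y\<in>UNIV. u y * ln (u y))"
      by (simp add: sum_distrib_right[symmetric] hf')
    finally show ?thesis .
  qed
  have e1: "(\<Sum>r\<in>UNIV. c r * ln (u r)) = (\<Sum>n\<in>UNIV. \<Sum>x\<in>UNIV. m n x * ln (m n x))"
    unfolding u_def'
  proof (rule ent)
    fix r n assume "c r \<noteq> 0"
    then show "m n (r n) \<noteq> 0" using mge[of r n] c0[of r] by linarith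
  qed (rule mg)
  have e2: "(\<Sum>r\<in>UNIV. u r * ln (u r)) = (\<Sum>n\<in>UNIV. \<Sum>x\<in>UNIV. m n x * ln (m n x))"
    unfolding u_def'
  proof (rule ent)
    fix r n assume "(\<Prod>n\<in>UNIV. m n (r n)) \<noteq> 0"
    then show "m n (r n) \<noteq> 0" by simp
  next
    fix n x show "(\<Sum>r\<in>{r. r n = x}. \<Prod>n\<in>UNIV. m n (r n)) = m n x"
      by (rule prod_marg) (rule ms)
  qed
  have "c = u"
    by (rule gibbs[OF c0 u0 cs us cu]) (use s1 s2 e1 e2 in auto)
  then show ?thesis by (simp add: c_def u_def)
qed

theorem theorem1:
  shows "(\<exists>p :: bool \<Rightarrow> (bool \<Rightarrow> bool) \<Rightarrow> real.
            valid_joint p \<and> (\<forall>s. pS p s > 0) \<and>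
            \<not> (\<exists>Q. stochastic_map Q \<and>
                   (\<forall>s r'. PNI p s r' = (\<Sum>r\<in>UNIV. cond p s r * Q r r'))))
       \<and> (\<forall>p :: 's::finite \<Rightarrow> ('n::finite \<Rightarrow> 'a::finite) \<Rightarrow> real.
            valid_joint p \<and> (\<forall>s. pS p s > 0) \<and> noise_correlated p \<longrightarrow>
            \<not> (\<exists>f :: ('n \<Rightarrow> 'a) \<Rightarrow> ('n \<Rightarrow> 'a).
                   \<forall>s r'. (\<Sum>r\<in>{r. f r = r'}. cond p s r) = PNI p s r'))"
proof
  show "\<forall>p :: 's::finite \<Rightarrow> ('n::finite \<Rightarrow> 'a::finite) \<Rightarrow> real.
            valid_joint p \<and> (\<forall>s. pS p s > 0) \<and> noise_correlated p \<longrightarrow>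
            \<not> (\<exists>f :: ('n \<Rightarrow> 'a) \<Rightarrow> ('n \<Rightarrow> 'a).
                   \<forall>s r'. (\<Sum>r\<in>{r. f r = r'}. cond p s r) = PNI p s r')"
  proof (intro allI impI notI)
    fix p :: "'s::finite \<Rightarrow> ('n::finite \<Rightarrow> 'a::finite) \<Rightarrow> real"
    assume a: "valid_joint p \<and> (\<forall>s. pS p s > 0) \<and> noise_correlated p"
      and "\<exists>f :: ('n \<Rightarrow> 'a) \<Rightarrow> ('n \<Rightarrow> 'a). \<forall>s r'. (\<Sum>r\<in>{r. f r = r'}. cond p s r) = PNI p s r'"
      then obtain f :: "('n \<Rightarrow> 'a) \<Rightarrow> ('n \<Rightarrow> 'a)"
      where hf: "\<forall>s r'. (\<Sum>r\<in>{r. f r = r'}. cond p s r) = PNI p s r'" by blast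
    from a obtain s r where ne: "cond p s r \<noteq> PNI p s r" unfolding noise_correlated_def by blast
    have v: "valid_joint p" and ps: "pS p s > 0" using a by auto
    have hf1: "\<And>r'. (\<Sum>r\<in>{r. f r = r'}. cond p s r) = PNI p s r'" using hf by blast
    have "cond p s = PNI p s" by (rule part2[OF v ps hf1])
    with ne show False by simp
  qed
next
  define r0 :: "bool \<Rightarrow> bool" where "r0 = (\<lambda>_. True)"
  define r1 :: "bool \<Rightarrow> bool" where "r1 = (\<lambda>_. False)"
  have d: "r0 \<noteq> r1" "r1 \<noteq> r0" by (auto simp: r0_def r1_def fun_eq_iff)
  define p :: "bool \<Rightarrow> (bool \<Rightarrow> bool) \<Rightarrow> real" where
    "p = (\<lambda>s r. if s then (if r = r0 then 1/2 else 0)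
                 else (if r = r0 then 1/4 else 0) + (if r = r1 then 1/4 else 0))"
  have pT: "pS p True = 1/2" by (simp add: pS_def p_def)
  have pF: "pS p False = 1/2" by (simp add: pS_def p_def sum.distrib)
  have cT: "cond p True r = (if r = r0 then 1 else 0)" for r unfolding cond_def pT by (simp add: p_def)
  have cF: "cond p False r = (if r = r0 then 1/2 else 0) + (if r = r1 then 1/2 else 0)" for r
    unfolding cond_def pF by (simp add: p_def)
  have mT: "marg p n True y = (if y then 1 else 0)" for n y
    by (simp add: marg_def cT r0_def)
  have mF: "marg p n False y = 1/2" for n y
    by (simp add: marg_def cF sum.distrib r0_def r1_def)
  have PT: "PNI p True r0 = 1" by (simp add: PNI_def mT r0_def)
  have PF: "PNI p False r0 = 1/4" by (simp add: PNI_def mF UNIV_bool)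
  have v: "valid_joint p"
    by (simp add: valid_joint_def p_def sum.distrib UNIV_bool d)
  show "\<exists>p :: bool \<Rightarrow> (bool \<Rightarrow> bool) \<Rightarrow> real.
            valid_joint p \<and> (\<forall>s. pS p s > 0) \<and>
            \<not> (\<exists>Q. stochastic_map Q \<and>
                   (\<forall>s r'. PNI p s r' = (\<Sum>r\<in>UNIV. cond p s r * Q r r')))"
  proof (intro exI[of _ p] conjI allI notI)
    show "valid_joint p" by (rule v)
    fix s show "0 < pS p s" using pT pF by (cases s) auto
  next
    assume "\<exists>Q. stochastic_map Q \<and> (\<forall>s r'. PNI p s r' = (\<Sum>r\<in>UNIV. cond p s r * Q r r'))"
    then obtain Q where sQ: "stochastic_map Q"
      and hQ: "\<And>s r'. PNI p s r' = (\<Sum>r\<in>UNIV. cond p s r * Q r r')" by blast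
    have m1: "(if P then b else 0) * (x::real) = (if P then b * x else 0)"
      for P b x by simp
    have "1 = Q r0 r0" using hQ[of True r0] by (simp add: PT cT m1)
    moreover have "1/4 = Q r0 r0 / 2 + Q r1 r0 / 2"
      using hQ[of False r0] by (simp add: PF cF distrib_right sum.distrib m1)
    moreover have "0 \<le> Q r1 r0" using sQ by (simp add: stochastic_map_def)
    ultimately show False by linarith
  qed
qed

end
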